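(* Let $n<\omega$, let $L\in\mathbf{M}_n$ and let $P$ be its dual $pm$-space. Then $L$ is simple if and only if $P=Q\cup\zeta(Q)$ for some order component $Q$ of $P$.
   Context: $\mathbf{M}_n$ is the variety of regular pseudocomplemented de Morgan algebras of range $n$: algebras $(L;\wedge,\vee,{}^\ast,{}^\prime,0,1)$ with bounded distributive lattice reduct, pseudocomplement ${}^\ast$, de Morgan involution ${}^\prime$, satisfying $x\wedge x^{\prime\ast\prime}\le y\vee y^\ast$ and $(x\wedge x^{\prime\ast})^{n(\prime\ast)}=(x\wedge x^{\prime\ast})^{(n+1)(\prime\ast)}$, where $x^{0(\prime\ast)}=x$, $x^{(k+1)(\prime\ast)}=((x^{k(\prime\ast)})')^\ast$. Simple algebras are non-trivial. The dual $pm$-space is the Priestley space $(P;\tau,\le)$ of prime ideals with involution $\zeta(I)=\{a:a'\notin I\}$. An order component of $P$ is a maximal subset any two elements of which are joined by a finite path in the comparability graph of $(P;\le)$. *)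

theory Defs
  imports Main
begin

text \<open>An algebra (L; meet, join, pseudocomplement, de Morgan negation, 0, 1).
  The carrier is the whole type 'a.\<close>
record 'a pmalg =
  meet :: "'a \<Rightarrow> 'a \<Rightarrow> 'a"
  join :: "'a \<Rightarrow> 'a \<Rightarrow> 'a"
  pc   :: "'a \<Rightarrow> 'a"
  neg  :: "'a \<Rightarrow> 'a"
  bot  :: 'a
  top  :: 'a

definition leq :: "'a pmalg \<Rightarrow> 'a \<Rightarrow> 'a \<Rightarrow> bool" where
  "leq A x y \<longleftrightarrow> meet A x y = x"

definition bdl :: "'a pmalg \<Rightarrow> bool" where
  "bdl A \<longleftrightarrow>
     (\<forall>x y z. meet A x (meet A y z) = meet A (meet A x y) z) \<and>
     (\<forall>x y z. join A x (join A y z) = join A (join A x y) z) \<and>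
     (\<forall>x y. meet A x y = meet A y x) \<and>
     (\<forall>x y. join A x y = join A y x) \<and>
     (\<forall>x y. meet A x (join A x y) = x) \<and>
     (\<forall>x y. join A x (meet A x y) = x) \<and>
     (\<forall>x y z. meet A x (join A y z) = join A (meet A x y) (meet A x z)) \<and>
     (\<forall>x. meet A x (bot A) = bot A) \<and>
     (\<forall>x. join A x (top A) = top A)"

definition is_pseudocomplemented :: "'a pmalg \<Rightarrow> bool" where
  "is_pseudocomplemented A \<longleftrightarrow> (\<forall>x y. meet A x y = bot A \<longleftrightarrow> leq A y (pc A x))"

definition is_de_morgan :: "'a pmalg \<Rightarrow> bool" where
  "is_de_morgan A \<longleftrightarrow>
     (\<forall>x. neg A (neg A x) = x) \<and>
     (\<forall>x y. neg A (meet A x y) = join A (neg A x) (neg A y)) \<and>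
     (\<forall>x y. neg A (join A x y) = meet A (neg A x) (neg A y)) \<and>
     neg A (bot A) = top A \<and> neg A (top A) = bot A"

definition iter_np :: "'a pmalg \<Rightarrow> nat \<Rightarrow> 'a \<Rightarrow> 'a" where
  "iter_np A k x = ((\<lambda>z. pc A (neg A z)) ^^ k) x"

definition in_M :: "nat \<Rightarrow> 'a pmalg \<Rightarrow> bool" where
  "in_M n A \<longleftrightarrow> bdl A \<and> is_pseudocomplemented A \<and> is_de_morgan A \<and>
     (\<forall>x y. leq A (meet A x (neg A (pc A (neg A x)))) (join A y (pc A y))) \<and>
     (\<forall>x. iter_np A n (meet A x (pc A (neg A x)))
          = iter_np A (Suc n) (meet A x (pc A (neg A x))))"

definition congruence :: "'a pmalg \<Rightarrow> ('a \<Rightarrow> 'a \<Rightarrow> bool) \<Rightarrow> bool" where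
  "congruence A \<theta> \<longleftrightarrow> equivp \<theta> \<and>
     (\<forall>x y u v. \<theta> x y \<and> \<theta> u v \<longrightarrow> \<theta> (meet A x u) (meet A y v)) \<and>
     (\<forall>x y u v. \<theta> x y \<and> \<theta> u v \<longrightarrow> \<theta> (join A x u) (join A y v)) \<and>
     (\<forall>x y. \<theta> x y \<longrightarrow> \<theta> (pc A x) (pc A y)) \<and>
     (\<forall>x y. \<theta> x y \<longrightarrow> \<theta> (neg A x) (neg A y))"

definition simple_alg :: "'a pmalg \<Rightarrow> bool" where
  "simple_alg A \<longleftrightarrow> (\<exists>x y::'a. x \<noteq> y) \<and>
     (\<forall>\<theta>. congruence A \<theta> \<longrightarrow> \<theta> = (=) \<or> \<theta> = (\<lambda>_ _. True))"

definition prime_ideal :: "'a pmalg \<Rightarrow> 'a set \<Rightarrow> bool" where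
  "prime_ideal A I \<longleftrightarrow> bot A \<in> I \<and> top A \<notin> I \<and>
     (\<forall>x y. x \<in> I \<and> leq A y x \<longrightarrow> y \<in> I) \<and>
     (\<forall>x y. x \<in> I \<and> y \<in> I \<longrightarrow> join A x y \<in> I) \<and>
     (\<forall>x y. meet A x y \<in> I \<longrightarrow> x \<in> I \<or> y \<in> I)"

text \<open>Underlying ordered set of the dual pm-space: prime ideals ordered by inclusion.\<close>
definition dual_space :: "'a pmalg \<Rightarrow> 'a set set" where
  "dual_space A = {I. prime_ideal A I}"

definition zeta :: "'a pmalg \<Rightarrow> 'a set \<Rightarrow> 'a set" where
  "zeta A I = {a. neg A a \<notin> I}"

definition comparable_in :: "'b set set \<Rightarrow> 'b set \<Rightarrow> 'b set \<Rightarrow> bool" where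
  "comparable_in P I J \<longleftrightarrow> I \<in> P \<and> J \<in> P \<and> (I \<subseteq> J \<or> J \<subseteq> I)"

definition path_connected_set :: "'b set set \<Rightarrow> 'b set set \<Rightarrow> bool" where
  "path_connected_set P Q \<longleftrightarrow> (\<forall>I\<in>Q. \<forall>J\<in>Q. (comparable_in P)\<^sup>*\<^sup>* I J)"

definition order_component :: "'b set set \<Rightarrow> 'b set set \<Rightarrow> bool" where
  "order_component P Q \<longleftrightarrow> Q \<noteq> {} \<and> Q \<subseteq> P \<and> path_connected_set P Q \<and>
     (\<forall>R. Q \<subseteq> R \<and> R \<subseteq> P \<and> path_connected_set P R \<longrightarrow> R = Q)"

end

theory Submission
  imports Defs
begin


locale pmL =
  fixes L :: "'a pmalg"
  assumes bdl: "bdl L" and pcp: "is_pseudocomplemented L" and dm: "is_de_morgan L"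
begin

abbreviation mt (infixl "\<otimes>" 70) where "x \<otimes> y \<equiv> meet L x y"
abbreviation jn (infixl "\<oplus>" 65) where "x \<oplus> y \<equiv> join L x y"
abbreviation le (infix "\<preceq>" 50) where "x \<preceq> y \<equiv> leq L x y"
abbreviation ps where "ps x \<equiv> pc L x"
abbreviation nn where "nn x \<equiv> neg L x"
abbreviation b0 where "b0 \<equiv> bot L"
abbreviation b1 where "b1 \<equiv> top L"

lemma m_assoc: "x \<otimes> (y \<otimes> z) = x \<otimes> y \<otimes> z" using bdl unfolding bdl_def by blast
lemma j_assoc: "x \<oplus> (y \<oplus> z) = x \<oplus> y \<oplus> z" using bdl unfolding bdl_def by blast
lemma m_comm: "x \<otimes> y = y \<otimes> x" using bdl unfolding bdl_def by blast
lemma j_comm: "x \<oplus> y = y \<oplus> x" using bdl unfolding bdl_def by blast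
lemma absorb1: "x \<otimes> (x \<oplus> y) = x" using bdl unfolding bdl_def by blast
lemma absorb2: "x \<oplus> (x \<otimes> y) = x" using bdl unfolding bdl_def by blast
lemma distr: "x \<otimes> (y \<oplus> z) = x \<otimes> y \<oplus> x \<otimes> z" using bdl unfolding bdl_def by blast
lemma m0: "x \<otimes> b0 = b0" using bdl unfolding bdl_def by blast
lemma j1: "x \<oplus> b1 = b1" using bdl unfolding bdl_def by blast

lemma m_idem[simp]: "x \<otimes> x = x" by (metis absorb1 absorb2)
lemma j_idem[simp]: "x \<oplus> x = x" by (metis absorb1 absorb2)
lemma m1[simp]: "x \<otimes> b1 = x" by (metis absorb1 j1)
lemma j0[simp]: "x \<oplus> b0 = x" by (metis absorb2 m0)
lemma m0'[simp]: "x \<otimes> b0 = b0" "b0 \<otimes> x = b0" by (metis m0 m_comm)+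
lemma j1'[simp]: "x \<oplus> b1 = b1" "b1 \<oplus> x = b1" by (metis j1 j_comm)+
lemma m1'[simp]: "b1 \<otimes> x = x" by (metis m1 m_comm)
lemma j0'[simp]: "b0 \<oplus> x = x" by (metis j0 j_comm)
lemma m_lcomm: "x \<otimes> (y \<otimes> z) = y \<otimes> (x \<otimes> z)" by (metis m_assoc m_comm)
lemma j_lcomm: "x \<oplus> (y \<oplus> z) = y \<oplus> (x \<oplus> z)" by (metis j_assoc j_comm)
lemmas mAC = m_assoc[symmetric] m_comm m_lcomm
lemmas jAC = j_assoc[symmetric] j_comm j_lcomm

lemma distr2: "(y \<oplus> z) \<otimes> x = y \<otimes> x \<oplus> z \<otimes> x" by (metis distr m_comm)
lemma absorb3: "x \<otimes> y \<oplus> x = x" by (metis absorb2 j_comm)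
lemma absorb4: "(x \<oplus> y) \<otimes> x = x" by (metis absorb1 m_comm)

lemma jdistr: "x \<oplus> y \<otimes> z = (x \<oplus> y) \<otimes> (x \<oplus> z)"
proof -
  have "(x \<oplus> y) \<otimes> (x \<oplus> z) = (x \<oplus> y) \<otimes> x \<oplus> (x \<oplus> y) \<otimes> z" by (rule distr)
  also have "\<dots> = x \<oplus> (x \<otimes> z \<oplus> y \<otimes> z)" by (simp add: absorb4 distr2 j_assoc)
  also have "\<dots> = x \<oplus> y \<otimes> z" by (metis absorb2 j_assoc)
  finally show ?thesis by simp
qed

lemma le_def: "x \<preceq> y \<longleftrightarrow> x \<otimes> y = x" by (simp add: leq_def)
lemma le_def2: "x \<preceq> y \<longleftrightarrow> x \<oplus> y = y" by (metis absorb1 absorb3 le_def m_comm)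
lemma le_refl[simp]: "x \<preceq> x" by (simp add: le_def)
lemma le_trans: "x \<preceq> y \<Longrightarrow> y \<preceq> z \<Longrightarrow> x \<preceq> z" by (metis le_def m_assoc)
lemma le_antisym: "x \<preceq> y \<Longrightarrow> y \<preceq> x \<Longrightarrow> x = y" by (metis le_def m_comm)
lemma le_m1[simp]: "x \<otimes> y \<preceq> x" unfolding le_def by (metis m_assoc m_comm m_idem)
lemma le_m2[simp]: "x \<otimes> y \<preceq> y" unfolding le_def by (metis m_assoc m_idem)
lemma le_j1[simp]: "x \<preceq> x \<oplus> y" by (simp add: le_def absorb1)
lemma le_j2[simp]: "y \<preceq> x \<oplus> y" by (metis le_j1 j_comm)
lemma le_mI: "z \<preceq> x \<Longrightarrow> z \<preceq> y \<Longrightarrow> z \<preceq> x \<otimes> y" by (metis le_def m_assoc)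
lemma le_jI: "x \<preceq> z \<Longrightarrow> y \<preceq> z \<Longrightarrow> x \<oplus> y \<preceq> z" by (metis le_def2 j_assoc)
lemma le_0[simp]: "b0 \<preceq> x" by (simp add: le_def)
lemma le_1[simp]: "x \<preceq> b1" by (simp add: le_def)
lemma m_mono: "x \<preceq> x' \<Longrightarrow> y \<preceq> y' \<Longrightarrow> x \<otimes> y \<preceq> x' \<otimes> y'"
  by (rule le_mI[OF le_trans[OF le_m1] le_trans[OF le_m2]])
lemma j_mono: "x \<preceq> x' \<Longrightarrow> y \<preceq> y' \<Longrightarrow> x \<oplus> y \<preceq> x' \<oplus> y'"
  by (rule le_jI[OF le_trans[OF _ le_j1] le_trans[OF _ le_j2]])
lemma le_0_iff: "x \<preceq> b0 \<longleftrightarrow> x = b0" by (simp add: le_def eq_commute)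
lemma le_1_iff: "b1 \<preceq> x \<longleftrightarrow> x = b1" by (simp add: le_def)

lemma pc_iff: "x \<otimes> y = b0 \<longleftrightarrow> y \<preceq> ps x" using pcp unfolding is_pseudocomplemented_def by blast
lemma pc_m[simp]: "x \<otimes> ps x = b0" using pc_iff by simp
lemma pc_m'[simp]: "ps x \<otimes> x = b0" using pc_m m_comm by metis
lemma pc_anti: "x \<preceq> y \<Longrightarrow> ps y \<preceq> ps x"
proof -
  assume "x \<preceq> y"
  then have "x \<otimes> ps y = x \<otimes> y \<otimes> ps y" by (simp add: le_def)
  also have "\<dots> = b0" by (simp add: m_assoc[symmetric])
  finally show ?thesis using pc_iff by blast
qed
lemma pc_join: "ps (x \<oplus> y) = ps x \<otimes> ps y"
proof (rule le_antisym)
  show "ps (x \<oplus> y) \<preceq> ps x \<otimes> ps y" by (simp add: le_mI pc_anti)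
  have a: "x \<otimes> (ps x \<otimes> ps y) = b0" by (simp add: m_assoc)
  have b: "y \<otimes> (ps x \<otimes> ps y) = b0" by (metis m_lcomm pc_m m0'(1))
  have "(x \<oplus> y) \<otimes> (ps x \<otimes> ps y) = b0" by (simp add: distr2 a b)
  then show "ps x \<otimes> ps y \<preceq> ps (x \<oplus> y)" using pc_iff by blast
qed

lemma nn_nn[simp]: "nn (nn x) = x" using dm unfolding is_de_morgan_def by blast
lemma nn_m: "nn (x \<otimes> y) = nn x \<oplus> nn y" using dm unfolding is_de_morgan_def by blast
lemma nn_j: "nn (x \<oplus> y) = nn x \<otimes> nn y" using dm unfolding is_de_morgan_def by blast
lemma nn_0[simp]: "nn b0 = b1" using dm unfolding is_de_morgan_def by blast
lemma nn_1[simp]: "nn b1 = b0" using dm unfolding is_de_morgan_def by blast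
lemma nn_anti: "x \<preceq> y \<Longrightarrow> nn y \<preceq> nn x"
proof -
  assume "x \<preceq> y"
  then have "x \<oplus> y = y" by (simp add: le_def2)
  then have "nn y = nn x \<otimes> nn y" using nn_j by metis
  then show ?thesis unfolding le_def using m_comm by metis
qed
lemma nn_inj: "nn x = nn y \<Longrightarrow> x = y"
proof -
  assume "nn x = nn y"
  then have "nn (nn x) = nn (nn y)" by simp
  then show ?thesis by simp
qed

definition g where "g z = ps (nn z)"
lemma g_mono: "x \<preceq> y \<Longrightarrow> g x \<preceq> g y" by (simp add: g_def nn_anti pc_anti)
lemma g_meet: "g (x \<otimes> y) = g x \<otimes> g y" by (simp add: g_def nn_m pc_join)
lemma gk_mono: "x \<preceq> y \<Longrightarrow> (g ^^ k) x \<preceq> (g ^^ k) y" by (induct k) (auto simp: g_mono)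
lemma gk_meet: "(g ^^ k) (x \<otimes> y) = (g ^^ k) x \<otimes> (g ^^ k) y" by (induct k) (auto simp: g_meet)
lemma join_plus: "t \<oplus> nn (ps (nn t)) = b1"
proof -
  have "nn (t \<oplus> nn (ps (nn t))) = b0" by (simp add: nn_j)
  then show ?thesis by (metis nn_nn nn_0)
qed


lemma distr_le: "(m1 \<oplus> x) \<otimes> (m2 \<oplus> y) \<preceq> m1 \<oplus> m2 \<oplus> x \<otimes> y"
proof -
  have e: "(m1 \<oplus> x) \<otimes> (m2 \<oplus> y) = (m1 \<oplus> x) \<otimes> m2 \<oplus> (m1 \<otimes> y \<oplus> x \<otimes> y)"
    by (simp add: distr distr2)
  have "(m1 \<oplus> x) \<otimes> m2 \<preceq> m1 \<oplus> m2 \<oplus> x \<otimes> y"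
    by (rule le_trans[OF le_m2]) (metis le_j1 le_j2 le_trans)
  moreover have "m1 \<otimes> y \<preceq> m1 \<oplus> m2 \<oplus> x \<otimes> y"
    by (rule le_trans[OF le_m1]) (metis le_j1 le_trans)
  moreover have "x \<otimes> y \<preceq> m1 \<oplus> m2 \<oplus> x \<otimes> y" by simp
  ultimately show ?thesis unfolding e by (simp add: le_jI)
qed

definition lcong :: "('a \<Rightarrow> 'a \<Rightarrow> bool) \<Rightarrow> bool" where
  "lcong \<theta> \<longleftrightarrow> equivp \<theta> \<and> (\<forall>x y u v. \<theta> x y \<and> \<theta> u v \<longrightarrow> \<theta> (x \<otimes> u) (y \<otimes> v)) \<and>
     (\<forall>x y u v. \<theta> x y \<and> \<theta> u v \<longrightarrow> \<theta> (x \<oplus> u) (y \<oplus> v))"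

definition idl :: "'a set \<Rightarrow> bool" where
  "idl A \<longleftrightarrow> b0 \<in> A \<and> (\<forall>x\<in>A. \<forall>y. y \<preceq> x \<longrightarrow> y \<in> A) \<and> (\<forall>x\<in>A. \<forall>y\<in>A. x \<oplus> y \<in> A)"
definition fil :: "'a set \<Rightarrow> bool" where
  "fil A \<longleftrightarrow> b1 \<in> A \<and> (\<forall>x\<in>A. \<forall>y. x \<preceq> y \<longrightarrow> y \<in> A) \<and> (\<forall>x\<in>A. \<forall>y\<in>A. x \<otimes> y \<in> A)"
definition sat :: "('a \<Rightarrow> 'a \<Rightarrow> bool) \<Rightarrow> 'a set \<Rightarrow> bool" where
  "sat \<theta> A \<longleftrightarrow> (\<forall>x y. \<theta> x y \<longrightarrow> x \<in> A \<longrightarrow> y \<in> A)"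

lemma lcong_refl: "lcong \<theta> \<Longrightarrow> \<theta> x x" unfolding lcong_def by (meson equivp_reflp)
lemma lcong_sym: "lcong \<theta> \<Longrightarrow> \<theta> x y \<Longrightarrow> \<theta> y x" unfolding lcong_def by (meson equivp_symp)
lemma lcong_trans: "lcong \<theta> \<Longrightarrow> \<theta> x y \<Longrightarrow> \<theta> y z \<Longrightarrow> \<theta> x z" unfolding lcong_def by (meson equivp_transp)
lemma lcong_m: "lcong \<theta> \<Longrightarrow> \<theta> x y \<Longrightarrow> \<theta> u v \<Longrightarrow> \<theta> (x \<otimes> u) (y \<otimes> v)" unfolding lcong_def by blast
lemma lcong_j: "lcong \<theta> \<Longrightarrow> \<theta> x y \<Longrightarrow> \<theta> u v \<Longrightarrow> \<theta> (x \<oplus> u) (y \<oplus> v)" unfolding lcong_def by blast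

lemma lcong_eq: "lcong (=)" unfolding lcong_def by (simp add: identity_equivp)

lemma prime_ideal_idl: "prime_ideal L J \<Longrightarrow> idl J"
  unfolding prime_ideal_def idl_def by blast

lemma pit:
  assumes th: "lcong \<theta>" and A: "idl A" "sat \<theta> A" and F: "fil F" "sat \<theta> F" and dis: "A \<inter> F = {}"
  shows "\<exists>J. prime_ideal L J \<and> A \<subseteq> J \<and> J \<inter> F = {} \<and> sat \<theta> J"
proof -
  define \<A> where "\<A> = {J. idl J \<and> sat \<theta> J \<and> A \<subseteq> J \<and> J \<inter> F = {}}"
  have ne: "\<A> \<noteq> {}" using A dis unfolding \<A>_def by blast
  have ch: "\<Union>\<C> \<in> \<A>" if "\<C> \<noteq> {}" "subset.chain \<A> \<C>" for \<C>
  proof -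
    have C: "\<C> \<subseteq> \<A>" and cc: "\<forall>X\<in>\<C>. \<forall>Y\<in>\<C>. X \<subseteq> Y \<or> Y \<subseteq> X"
      using that(2) unfolding subset.chain_def by auto
    have "idl (\<Union>\<C>)" unfolding idl_def
    proof (intro conjI ballI allI impI)
      show "b0 \<in> \<Union>\<C>" using that(1) C unfolding \<A>_def idl_def by blast
    next
      fix x y assume "x \<in> \<Union>\<C>" "y \<preceq> x" then show "y \<in> \<Union>\<C>"
        using C unfolding \<A>_def idl_def by blast
    next
      fix x y assume x: "x \<in> \<Union>\<C>" and y: "y \<in> \<Union>\<C>"
      then obtain X Y where XY: "X \<in> \<C>" "Y \<in> \<C>" "x \<in> X" "y \<in> Y" by blast
      show "x \<oplus> y \<in> \<Union>\<C>"
      proof (cases "X \<subseteq> Y")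
        case True then show ?thesis using XY C unfolding \<A>_def idl_def by blast
      next
        case False then have "Y \<subseteq> X" using cc XY by blast
        then show ?thesis using XY C unfolding \<A>_def idl_def by blast
      qed
    qed
    moreover have "sat \<theta> (\<Union>\<C>)" using C unfolding \<A>_def sat_def by blast
    moreover have "A \<subseteq> \<Union>\<C>" using C that(1) unfolding \<A>_def by blast
    moreover have "\<Union>\<C> \<inter> F = {}" using C unfolding \<A>_def by blast
    ultimately show ?thesis unfolding \<A>_def by blast
  qed
  obtain M where M: "M \<in> \<A>" and Mmax: "\<forall>X\<in>\<A>. M \<subseteq> X \<longrightarrow> X = M"
    using subset_Zorn_nonempty[OF ne ch] by blast
  have Midl: "idl M" and Msat: "sat \<theta> M" and AM: "A \<subseteq> M" and MF: "M \<inter> F = {}"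
    using M unfolding \<A>_def by auto
  have b1F: "b1 \<in> F" using F unfolding fil_def by blast
  have Fup: "\<And>x y. x \<in> F \<Longrightarrow> x \<preceq> y \<Longrightarrow> y \<in> F" using F unfolding fil_def by blast
  have Fm: "\<And>x y. x \<in> F \<Longrightarrow> y \<in> F \<Longrightarrow> x \<otimes> y \<in> F" using F unfolding fil_def by blast
  have Fsat: "\<And>x y. \<theta> x y \<Longrightarrow> x \<in> F \<Longrightarrow> y \<in> F" using F unfolding sat_def by blast
  have Mdown: "\<And>x y. x \<in> M \<Longrightarrow> y \<preceq> x \<Longrightarrow> y \<in> M" using Midl unfolding idl_def by blast
  have Mj: "\<And>x y. x \<in> M \<Longrightarrow> y \<in> M \<Longrightarrow> x \<oplus> y \<in> M" using Midl unfolding idl_def by blast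
  have M0: "b0 \<in> M" using Midl unfolding idl_def by blast
  have ext: "\<exists>m\<in>M. m \<oplus> x \<in> F" if xM: "x \<notin> M" for x
  proof -
    define Mx where "Mx = {z. \<exists>m\<in>M. \<theta> (z \<otimes> (m \<oplus> x)) z}"
    have MMx: "M \<subseteq> Mx"
    proof
      fix z assume "z \<in> M"
      moreover have "\<theta> (z \<otimes> (z \<oplus> x)) z" using absorb1 lcong_refl[OF th] by simp
      ultimately show "z \<in> Mx" unfolding Mx_def by blast
    qed
    have xMx: "x \<in> Mx"
    proof -
      have "\<theta> (x \<otimes> (b0 \<oplus> x)) x" using lcong_refl[OF th] by simp
      then show ?thesis using M0 unfolding Mx_def by blast
    qed
    have "idl Mx" unfolding idl_def
    proof (intro conjI ballI allI impI)
      show "b0 \<in> Mx" using MMx M0 by blast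
    next
      fix z y assume z: "z \<in> Mx" and yz: "y \<preceq> z"
      then obtain m where m: "m \<in> M" "\<theta> (z \<otimes> (m \<oplus> x)) z" unfolding Mx_def by blast
      have "\<theta> (y \<otimes> (z \<otimes> (m \<oplus> x))) (y \<otimes> z)" by (rule lcong_m[OF th lcong_refl[OF th] m(2)])
      moreover have "y \<otimes> z = y" using yz by (simp add: le_def)
      moreover have "y \<otimes> (z \<otimes> (m \<oplus> x)) = y \<otimes> z \<otimes> (m \<oplus> x)" by (simp add: m_assoc)
      ultimately have "\<theta> (y \<otimes> (m \<oplus> x)) y" by simp
      then show "y \<in> Mx" using m(1) unfolding Mx_def by blast
    next
      fix z1 z2 assume z1: "z1 \<in> Mx" and z2: "z2 \<in> Mx"
      then obtain m1 m2 where m1: "m1 \<in> M" "\<theta> (z1 \<otimes> (m1 \<oplus> x)) z1"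
        and m2: "m2 \<in> M" "\<theta> (z2 \<otimes> (m2 \<oplus> x)) z2" unfolding Mx_def by blast
      define c where "c = m1 \<oplus> m2 \<oplus> x"
      have mc: "m1 \<oplus> m2 \<in> M" using Mj m1 m2 by blast
      have step: "\<theta> (z \<otimes> c) z" if "\<theta> (z \<otimes> (m \<oplus> x)) z" "m \<oplus> x \<preceq> c" for z m
      proof -
        have "\<theta> (z \<otimes> (m \<oplus> x) \<otimes> c) (z \<otimes> c)" by (rule lcong_m[OF th that(1) lcong_refl[OF th]])
        moreover have "z \<otimes> (m \<oplus> x) \<otimes> c = z \<otimes> (m \<oplus> x)"
          using that(2) by (simp add: le_def m_assoc[symmetric])
        ultimately have "\<theta> (z \<otimes> (m \<oplus> x)) (z \<otimes> c)" by simp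
        then show ?thesis by (meson lcong_sym lcong_trans th that(1))
      qed
      have c1: "m1 \<oplus> x \<preceq> c" unfolding c_def by (rule j_mono) (simp_all)
      have c2: "m2 \<oplus> x \<preceq> c" unfolding c_def by (rule j_mono) (simp_all)
      have "\<theta> (z1 \<otimes> c \<oplus> z2 \<otimes> c) (z1 \<oplus> z2)"
        by (rule lcong_j[OF th step[OF m1(2) c1] step[OF m2(2) c2]])
      then have "\<theta> ((z1 \<oplus> z2) \<otimes> c) (z1 \<oplus> z2)" by (simp add: distr2)
      then show "z1 \<oplus> z2 \<in> Mx" using mc unfolding Mx_def c_def by blast
    qed
    moreover have "sat \<theta> Mx" unfolding sat_def
    proof (intro allI impI)
      fix z z' assume zz: "\<theta> z z'" and z: "z \<in> Mx"
      then obtain m where m: "m \<in> M" "\<theta> (z \<otimes> (m \<oplus> x)) z" unfolding Mx_def by blast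
      have "\<theta> (z' \<otimes> (m \<oplus> x)) (z \<otimes> (m \<oplus> x))"
        by (rule lcong_m[OF th lcong_sym[OF th zz] lcong_refl[OF th]])
      then have "\<theta> (z' \<otimes> (m \<oplus> x)) z'" by (meson lcong_trans th m(2) zz)
      then show "z' \<in> Mx" using m(1) unfolding Mx_def by blast
    qed
    moreover have "A \<subseteq> Mx" using AM MMx by blast
    moreover have "Mx \<noteq> M" using xMx xM by blast
    ultimately have "Mx \<inter> F \<noteq> {}" using Mmax MMx unfolding \<A>_def by blast
    then obtain z m where zF: "z \<in> F" and m: "m \<in> M" "\<theta> (z \<otimes> (m \<oplus> x)) z" unfolding Mx_def by blast
    have "z \<otimes> (m \<oplus> x) \<in> F" using Fsat[OF lcong_sym[OF th m(2)] zF] .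
    then have "m \<oplus> x \<in> F" using Fup le_m2 by blast
    then show ?thesis using m(1) by blast
  qed
  have "prime_ideal L M" unfolding prime_ideal_def
  proof (intro conjI allI impI)
    show "b0 \<in> M" by (rule M0)
    show "b1 \<notin> M" using b1F MF by blast
  next
    fix x y assume "x \<in> M \<and> y \<preceq> x" then show "y \<in> M" using Mdown by blast
  next
    fix x y assume "x \<in> M \<and> y \<in> M" then show "x \<oplus> y \<in> M" using Mj by blast
  next
    fix x y assume xy: "x \<otimes> y \<in> M"
    show "x \<in> M \<or> y \<in> M"
    proof (rule ccontr)
      assume "\<not> (x \<in> M \<or> y \<in> M)"
      then obtain m1 m2 where m1: "m1 \<in> M" "m1 \<oplus> x \<in> F" and m2: "m2 \<in> M" "m2 \<oplus> y \<in> F"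
        using ext by blast
      have "(m1 \<oplus> x) \<otimes> (m2 \<oplus> y) \<in> F" using Fm m1 m2 by blast
      then have "m1 \<oplus> m2 \<oplus> x \<otimes> y \<in> F" using Fup distr_le by blast
      moreover have "m1 \<oplus> m2 \<oplus> x \<otimes> y \<in> M" using Mj m1 m2 xy by blast
      ultimately show False using MF by blast
    qed
  qed
  then show ?thesis using AM MF Msat by blast
qed


abbreviation PI where "PI J \<equiv> prime_ideal L J"
abbreviation Z where "Z J \<equiv> zeta L J"

lemma PI_0: "PI J \<Longrightarrow> b0 \<in> J" unfolding prime_ideal_def by blast
lemma PI_1: "PI J \<Longrightarrow> b1 \<notin> J" unfolding prime_ideal_def by blast
lemma PI_down: "PI J \<Longrightarrow> x \<in> J \<Longrightarrow> y \<preceq> x \<Longrightarrow> y \<in> J" unfolding prime_ideal_def by blast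
lemma PI_j: "PI J \<Longrightarrow> x \<oplus> y \<in> J \<longleftrightarrow> x \<in> J \<and> y \<in> J"
  unfolding prime_ideal_def by (meson le_j1 le_j2)
lemma PI_m: "PI J \<Longrightarrow> x \<otimes> y \<in> J \<longleftrightarrow> x \<in> J \<or> y \<in> J"
  unfolding prime_ideal_def by (meson le_m1 le_m2)
lemma PI_pc: "PI J \<Longrightarrow> x \<notin> J \<Longrightarrow> ps x \<in> J"
  using PI_m[of J x "ps x"] PI_0[of J] by simp

lemma pc_b0[simp]: "ps b0 = b1"
  using pc_iff[of b0 b1] le_1_iff by simp

lemma pc_lemma:
  assumes J: "PI J" and a: "ps a \<in> J"
  shows "\<exists>K. PI K \<and> K \<subseteq> J \<and> a \<notin> K"
proof -
  define F where "F = {x. \<exists>f. f \<notin> J \<and> f \<otimes> a \<preceq> x}"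
  have i: "idl {b0}" unfolding idl_def by (auto simp: le_0_iff)
  have f: "fil F" unfolding fil_def
  proof (intro conjI ballI allI impI)
    show "b1 \<in> F" unfolding F_def using PI_1[OF J] by (intro CollectI exI[of _ b1]) simp
  next
    fix x y assume "x \<in> F" "x \<preceq> y" then show "y \<in> F" unfolding F_def using le_trans by blast
  next
    fix x y assume "x \<in> F" "y \<in> F"
    then obtain f1 f2 where "f1 \<notin> J" "f1 \<otimes> a \<preceq> x" "f2 \<notin> J" "f2 \<otimes> a \<preceq> y" unfolding F_def by blast
    moreover have "f1 \<otimes> f2 \<otimes> a \<preceq> (f1 \<otimes> a) \<otimes> (f2 \<otimes> a)"
      by (rule le_mI) (simp_all add: m_mono)
    ultimately show "x \<otimes> y \<in> F" unfolding F_def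
      by (intro CollectI exI[of _ "f1 \<otimes> f2"]) (meson PI_m[OF J] le_trans m_mono)
  qed
  have d: "{b0} \<inter> F = {}"
  proof -
    { assume "b0 \<in> F"
      then obtain f where "f \<notin> J" "f \<otimes> a \<preceq> b0" unfolding F_def by blast
      then have "a \<otimes> f = b0" by (simp add: le_0_iff m_comm)
      then have "f \<preceq> ps a" using pc_iff by blast
      then have False using PI_down[OF J a] \<open>f \<notin> J\<close> by blast }
    then show ?thesis by blast
  qed
  obtain K where K: "PI K" "K \<inter> F = {}"
    using pit[OF lcong_eq i _ f _ d] unfolding sat_def by blast
  have "a \<in> F" unfolding F_def using PI_1[OF J] by (intro CollectI exI[of _ b1]) simp
  then have "a \<notin> K" using K by blast
  moreover have "K \<subseteq> J"
  proof
    fix x assume "x \<in> K"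
    show "x \<in> J"
    proof (rule ccontr)
      assume "x \<notin> J" then have "x \<in> F" unfolding F_def by (intro CollectI exI[of _ x]) simp
      then show False using K \<open>x \<in> K\<close> by blast
    qed
  qed
  ultimately show ?thesis using K by blast
qed

lemma Z_PI: assumes J: "PI J" shows "PI (Z J)"
  unfolding prime_ideal_def zeta_def
proof (intro conjI allI impI CollectI)
  show "nn b0 \<notin> J" using PI_1[OF J] by simp
  show "b1 \<notin> {a. nn a \<notin> J}" using PI_0[OF J] by simp
next
  fix x y assume "x \<in> {a. nn a \<notin> J} \<and> y \<preceq> x"
  then show "nn y \<notin> J" using PI_down[OF J] nn_anti by blast
next
  fix x y assume "x \<in> {a. nn a \<notin> J} \<and> y \<in> {a. nn a \<notin> J}"
  then show "nn (x \<oplus> y) \<notin> J" by (simp add: nn_j PI_m[OF J])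
next
  fix x y assume "x \<otimes> y \<in> {a. nn a \<notin> J}"
  then show "x \<in> {a. nn a \<notin> J} \<or> y \<in> {a. nn a \<notin> J}" by (simp add: nn_m PI_j[OF J])
qed

lemma ZZ[simp]: "Z (Z J) = J" unfolding zeta_def by simp
lemma Z_mem: "x \<in> Z J \<longleftrightarrow> nn x \<notin> J" unfolding zeta_def by simp
lemma Z_anti: "J \<subseteq> K \<Longrightarrow> Z K \<subseteq> Z J" unfolding zeta_def by blast
lemma Z_anti_iff: "Z K \<subseteq> Z J \<longleftrightarrow> J \<subseteq> K" by (metis ZZ Z_anti)

end


locale pmR = pmL +
  assumes reg: "\<forall>x y. leq L (meet L x (neg L (pc L (neg L x)))) (join L y (pc L y))"
begin

lemma no3chain:
  assumes J0: "PI J0" and J1: "PI J1" and J2: "PI J2" and s1: "J0 \<subset> J1" and s2: "J1 \<subset> J2"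
  shows False
proof -
  obtain y where y: "y \<in> J1" "y \<notin> J0" using s1 by blast
  obtain x where x: "x \<in> J2" "x \<notin> J1" using s2 by blast
  have "ps y \<in> J1" using PI_pc[OF J0 y(2)] s1 by blast
  then have yy: "y \<oplus> ps y \<in> J1" using y(1) PI_j[OF J1] by blast
  have "nn (ps (nn x)) \<notin> J2" using x(1) join_plus[of x] PI_j[OF J2] PI_1[OF J2] by metis
  then have "nn (ps (nn x)) \<notin> J1" using s2 by blast
  then have "x \<otimes> nn (ps (nn x)) \<notin> J1" using x(2) PI_m[OF J1] by blast
  moreover have "x \<otimes> nn (ps (nn x)) \<preceq> y \<oplus> ps y" using reg by blast
  ultimately show False using PI_down[OF J1 yy] by blast
qed

lemma cong_lcong: "congruence L \<theta> \<Longrightarrow> lcong \<theta>"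
  unfolding congruence_def lcong_def by blast

lemma sat_down:
  assumes c: "congruence L \<theta>" and J: "PI J" "sat \<theta> J" and K: "PI K" and KJ: "K \<subseteq> J"
  shows "sat \<theta> K"
  unfolding sat_def
proof (intro allI impI)
  have th: "lcong \<theta>" using c by (rule cong_lcong)
  have thpc: "\<And>x y. \<theta> x y \<Longrightarrow> \<theta> (ps x) (ps y)" using c unfolding congruence_def by blast
  fix x y assume xy: "\<theta> x y" and xK: "x \<in> K"
  show "y \<in> K"
  proof (rule ccontr)
    assume yK: "y \<notin> K"
    define u where "u = x \<otimes> y"
    have uK: "u \<in> K" unfolding u_def using xK PI_m[OF K] by blast
    have uy: "\<theta> u y" unfolding u_def using lcong_m[OF th xy lcong_refl[OF th, of y]] by simp
    have puK: "ps u \<notin> K"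
    proof
      assume "ps u \<in> K"
      then obtain K0 where K0: "PI K0" "K0 \<subseteq> K" "u \<notin> K0" using pc_lemma[OF K] by blast
      have "K0 \<subset> K" using K0 uK by blast
      moreover have "K \<subset> J"
      proof -
        have "y \<in> J" using J(2) xy xK KJ unfolding sat_def by blast
        then show ?thesis using KJ yK by blast
      qed
      ultimately show False using no3chain[OF K0(1) K J(1)] by blast
    qed
    define v where "v = y \<otimes> ps u"
    have "\<theta> v (u \<otimes> ps u)" unfolding v_def
      using lcong_m[OF th lcong_sym[OF th uy] lcong_refl[OF th, of "ps u"]] .
    then have vb0: "\<theta> b0 v" using lcong_sym[OF th] by simp
    have vK: "v \<notin> K" unfolding v_def using yK puK PI_m[OF K] by blast
    have "\<theta> (ps b0) (ps v)" using thpc[OF vb0] .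
    then have "\<theta> (ps v) b1" using lcong_sym[OF th] by simp
    then have "ps v \<notin> J" using J(2) PI_1[OF J(1)] unfolding sat_def by blast
    then have "ps v \<notin> K" using KJ by blast
    then show False using vK PI_pc[OF K] by blast
  qed
qed

lemma sat_Z:
  assumes c: "congruence L \<theta>" and J: "PI J" "sat \<theta> J"
  shows "sat \<theta> (Z J)"
  unfolding sat_def Z_mem
proof (intro allI impI)
  have th: "lcong \<theta>" using c by (rule cong_lcong)
  have thn: "\<And>x y. \<theta> x y \<Longrightarrow> \<theta> (nn x) (nn y)" using c unfolding congruence_def by blast
  fix x y assume "\<theta> x y" "nn x \<notin> J"
  then show "nn y \<notin> J" using J(2) thn[OF lcong_sym[OF th]] unfolding sat_def by blast
qed

lemma sat_up:
  assumes c: "congruence L \<theta>" and J: "PI J" "sat \<theta> J" and K: "PI K" and KJ: "J \<subseteq> K"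
  shows "sat \<theta> K"
proof -
  have "sat \<theta> (Z K)" using sat_down[OF c Z_PI[OF J(1)] sat_Z[OF c J] Z_PI[OF K] Z_anti[OF KJ]] .
  then show ?thesis using sat_Z[OF c Z_PI[OF K]] by simp
qed

lemma sat_comp:
  assumes c: "congruence L \<theta>" and r: "(comparable_in (dual_space L))\<^sup>*\<^sup>* J K"
    and J: "PI J" "sat \<theta> J"
  shows "sat \<theta> K"
  using r
proof (induct rule: rtranclp_induct)
  case base then show ?case using J by simp
next
  case (step y z)
  have y: "PI y" "PI z" using step(2) unfolding comparable_in_def dual_space_def by auto
  show ?case using step(2,3) sat_up[OF c y(1) step(3) y(2)] sat_down[OF c y(1) step(3) y(2)]
    unfolding comparable_in_def by blast
qed

lemma total_if: assumes th: "lcong \<theta>" and t: "\<theta> b0 b1" shows "\<theta> x y"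
proof -
  have "\<theta> (x \<otimes> b0) (x \<otimes> b1)" by (rule lcong_m[OF th lcong_refl[OF th] t])
  then have 1: "\<theta> b0 x" by simp
  have "\<theta> (y \<otimes> b0) (y \<otimes> b1)" by (rule lcong_m[OF th lcong_refl[OF th] t])
  then have 2: "\<theta> b0 y" by simp
  show ?thesis by (rule lcong_trans[OF th lcong_sym[OF th 1] 2])
qed

lemma sat_exists:
  assumes c: "congruence L \<theta>" and nt: "\<not> \<theta> b0 b1"
  shows "\<exists>J. PI J \<and> sat \<theta> J"
proof -
  have th: "lcong \<theta>" using c by (rule cong_lcong)
  have i: "idl {z. \<theta> z b0}" unfolding idl_def
  proof (intro conjI ballI allI impI CollectI)
    show "\<theta> b0 b0" by (rule lcong_refl[OF th])
  next
    fix x y assume "x \<in> {z. \<theta> z b0}" "y \<preceq> x"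
    then have "\<theta> x b0" by simp
    then have "\<theta> (y \<otimes> x) (y \<otimes> b0)" by (rule lcong_m[OF th lcong_refl[OF th]])
    moreover have "y \<otimes> x = y" using \<open>y \<preceq> x\<close> by (simp add: le_def)
    ultimately show "\<theta> y b0" by simp
  next
    fix x y assume "x \<in> {z. \<theta> z b0}" "y \<in> {z. \<theta> z b0}"
    then have "\<theta> (x \<oplus> y) (b0 \<oplus> b0)" using lcong_j[OF th, of x b0 y b0] by simp
    then show "\<theta> (x \<oplus> y) b0" by simp
  qed
  have is': "sat \<theta> {z. \<theta> z b0}" unfolding sat_def
  proof (intro allI impI CollectI)
    fix a b assume ab: "\<theta> a b" and "a \<in> {z. \<theta> z b0}"
    then have "\<theta> a b0" by simp
    then show "\<theta> b b0" by (rule lcong_trans[OF th lcong_sym[OF th ab]])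
  qed
  have f: "fil {z. \<theta> z b1}" unfolding fil_def
  proof (intro conjI ballI allI impI CollectI)
    show "\<theta> b1 b1" by (rule lcong_refl[OF th])
  next
    fix x y assume "x \<in> {z. \<theta> z b1}" "x \<preceq> y"
    then have "\<theta> x b1" by simp
    then have "\<theta> (y \<oplus> x) (y \<oplus> b1)" by (rule lcong_j[OF th lcong_refl[OF th]])
    moreover have "y \<oplus> x = y" using \<open>x \<preceq> y\<close> le_def2 j_comm by metis
    ultimately show "\<theta> y b1" by simp
  next
    fix x y assume "x \<in> {z. \<theta> z b1}" "y \<in> {z. \<theta> z b1}"
    then have "\<theta> (x \<otimes> y) (b1 \<otimes> b1)" using lcong_m[OF th, of x b1 y b1] by simp
    then show "\<theta> (x \<otimes> y) b1" by simp
  qed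
  have fs: "sat \<theta> {z. \<theta> z b1}" unfolding sat_def
  proof (intro allI impI CollectI)
    fix a b assume ab: "\<theta> a b" and "a \<in> {z. \<theta> z b1}"
    then have "\<theta> a b1" by simp
    then show "\<theta> b b1" by (rule lcong_trans[OF th lcong_sym[OF th ab]])
  qed
  have d: "{z. \<theta> z b0} \<inter> {z. \<theta> z b1} = {}"
  proof -
    { fix z assume z0: "\<theta> z b0" and z1: "\<theta> z b1"
      have "\<theta> b0 b1" by (rule lcong_trans[OF th lcong_sym[OF th z0] z1])
      then have False using nt by simp }
    then show ?thesis by blast
  qed
  show ?thesis using pit[OF th i is' f fs d] by blast
qed

lemma eq_if_allsat:
  assumes th: "lcong \<theta>" and all: "\<And>K. PI K \<Longrightarrow> sat \<theta> K" and xy: "\<theta> x y"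
  shows "x = y"
proof (rule ccontr)
  assume ne: "x \<noteq> y"
  have i2: "idl {z. z \<preceq> x \<otimes> y}" unfolding idl_def
  proof (intro conjI ballI allI impI CollectI)
    fix a b assume "a \<in> {z. z \<preceq> x \<otimes> y}" "b \<preceq> a"
    then show "b \<preceq> x \<otimes> y" using le_trans[of b a] by simp
  next
    fix a b assume "a \<in> {z. z \<preceq> x \<otimes> y}" "b \<in> {z. z \<preceq> x \<otimes> y}"
    then show "a \<oplus> b \<preceq> x \<otimes> y" using le_jI[of a _ b] by simp
  qed simp
  have f2: "fil {z. x \<oplus> y \<preceq> z}" unfolding fil_def
  proof (intro conjI ballI allI impI CollectI)
    fix a b assume "a \<in> {z. x \<oplus> y \<preceq> z}" "a \<preceq> b"
    then show "x \<oplus> y \<preceq> b" using le_trans[of _ a b] by simp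
  next
    fix a b assume "a \<in> {z. x \<oplus> y \<preceq> z}" "b \<in> {z. x \<oplus> y \<preceq> z}"
    then show "x \<oplus> y \<preceq> a \<otimes> b" using le_mI[of _ a b] by simp
  qed simp
  have d2: "{z. z \<preceq> x \<otimes> y} \<inter> {z. x \<oplus> y \<preceq> z} = {}"
  proof -
    { fix z assume "z \<preceq> x \<otimes> y" "x \<oplus> y \<preceq> z"
      then have h: "x \<oplus> y \<preceq> x \<otimes> y" by (rule le_trans[rotated])
      have "x \<preceq> y" using le_trans[OF le_trans[OF le_j1[of x y] h] le_m2[of x y]] .
      moreover have "y \<preceq> x" using le_trans[OF le_trans[OF le_j2[of y x] h] le_m1[of x y]] .
      ultimately have False using ne le_antisym by blast }
    then show ?thesis by blast
  qed
  have sq: "sat (=) A" for A :: "'a set" unfolding sat_def by simp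
  obtain K where K: "PI K" "{z. z \<preceq> x \<otimes> y} \<subseteq> K" "K \<inter> {z. x \<oplus> y \<preceq> z} = {}"
    using pit[OF lcong_eq i2 sq f2 sq d2] by blast
  have "\<theta> (x \<otimes> y) (x \<oplus> y)"
  proof -
    have 1: "\<theta> (x \<otimes> y) (x \<otimes> x)" by (rule lcong_m[OF th lcong_refl[OF th] lcong_sym[OF th xy]])
    have 2: "\<theta> (x \<oplus> y) (x \<oplus> x)" by (rule lcong_j[OF th lcong_refl[OF th] lcong_sym[OF th xy]])
    have a1: "\<theta> (x \<otimes> y) x" using 1 by simp
    have a2: "\<theta> (x \<oplus> y) x" using 2 by simp
    show ?thesis by (rule lcong_trans[OF th a1 lcong_sym[OF th a2]])
  qed
  moreover have "x \<otimes> y \<in> K" using K(2) le_refl by blast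
  ultimately have "x \<oplus> y \<in> K" using all[OF K(1)] unfolding sat_def by blast
  then show False using K(3) le_refl by blast
qed

lemma allsat:
  assumes Q: "order_component (dual_space L) Q" and PQ: "dual_space L = Q \<union> Z ` Q"
    and c: "congruence L \<theta>" and J: "PI J" "sat \<theta> J" and K: "PI K"
  shows "sat \<theta> K"
proof -
  have Qs: "Q \<subseteq> dual_space L" and Qc: "path_connected_set (dual_space L) Q"
    using Q unfolding order_component_def by auto
  have satQ: "sat \<theta> K" if K: "K \<in> Q" and K0: "K0 \<in> Q" "PI K0" "sat \<theta> K0" for K K0
  proof -
    have "(comparable_in (dual_space L))\<^sup>*\<^sup>* K0 K" using Qc K K0(1) unfolding path_connected_set_def by blast
    then show ?thesis by (rule sat_comp[OF c _ K0(2,3)])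
  qed
  have JP: "J \<in> dual_space L" using J unfolding dual_space_def by simp
  obtain K0 where K0: "K0 \<in> Q" "PI K0" "sat \<theta> K0"
  proof (cases "J \<in> Q")
    case True then show ?thesis using J that by blast
  next
    case False
    then obtain J' where J': "J' \<in> Q" "J = Z J'" using JP PQ by blast
    have pj: "PI J'" using J' Qs unfolding dual_space_def by blast
    have "sat \<theta> (Z J)" by (rule sat_Z[OF c J])
    then have "sat \<theta> J'" using J' by simp
    then show ?thesis using that J'(1) pj by blast
  qed
  have KP: "K \<in> dual_space L" using K unfolding dual_space_def by simp
  show ?thesis
  proof (cases "K \<in> Q")
    case True then show ?thesis using satQ K0 by blast
  next
    case False
    then obtain K' where K': "K' \<in> Q" "K = Z K'" using KP PQ by blast
    have pk: "PI K'" using K' Qs unfolding dual_space_def by blast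
    have "sat \<theta> (Z K')" by (rule sat_Z[OF c pk satQ[OF K'(1) K0]])
    then show ?thesis using K' by simp
  qed
qed

theorem simple_if:
  assumes Q: "order_component (dual_space L) Q" and PQ: "dual_space L = Q \<union> Z ` Q"
  shows "simple_alg L"
  unfolding simple_alg_def
proof (intro conjI allI impI)
  have Qs: "Q \<subseteq> dual_space L" and Qne: "Q \<noteq> {}"
    using Q unfolding order_component_def by auto
  obtain J0 where "J0 \<in> Q" using Qne by blast
  then have "PI J0" using Qs unfolding dual_space_def by blast
  then have "b0 \<noteq> b1" using PI_0[of J0] PI_1[of J0] by auto
  then show "\<exists>x y::'a. x \<noteq> y" by blast
next
  fix \<theta> assume c: "congruence L \<theta>"
  have th: "lcong \<theta>" using c by (rule cong_lcong)
  show "\<theta> = (=) \<or> \<theta> = (\<lambda>_ _. True)"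
  proof (cases "\<theta> b0 b1")
    case True
    then have "\<theta> = (\<lambda>_ _. True)" using total_if[OF th] by (intro ext) simp
    then show ?thesis by (rule disjI2)
  next
    case False
    obtain J where J: "PI J" "sat \<theta> J" using sat_exists[OF c False] by blast
    have "\<theta> = (=)"
    proof (intro ext iffI)
      fix x y assume "\<theta> x y"
      then show "x = y" using eq_if_allsat[OF th allsat[OF Q PQ c J]] by blast
    next
      fix x y :: 'a assume "x = y" then show "\<theta> x y" using lcong_refl[OF th] by simp
    qed
    then show ?thesis by (rule disjI1)
  qed
qed

end


lemma rtranclp_sym_rel:
  assumes s: "\<And>a b. r a b \<Longrightarrow> r b a" and xy: "r\<^sup>*\<^sup>* x y"
  shows "r\<^sup>*\<^sup>* y x"
  using xy
proof (induct rule: rtranclp_induct)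
  case base then show ?case by simp
next
  case (step y z) show ?case by (rule converse_rtranclp_into_rtranclp[of r, OF s[OF step(2)] step(3)])
qed

locale pmN = pmL +
  fixes n :: nat
  assumes rng: "\<forall>x. (g ^^ n) (x \<otimes> g x) = (g ^^ Suc n) (x \<otimes> g x)"
begin

lemma range_k: "n \<le> k \<Longrightarrow> (g ^^ k) (x \<otimes> g x) = (g ^^ Suc k) (x \<otimes> g x)"
proof (induct k rule: dec_induct)
  case base then show ?case using rng by blast
next
  case (step k)
  have "(g ^^ Suc k) (x \<otimes> g x) = g ((g ^^ k) (x \<otimes> g x))" by (simp only: funpow.simps o_apply)
  also have "\<dots> = g ((g ^^ Suc k) (x \<otimes> g x))" using step(3) by (rule arg_cong)
  also have "\<dots> = (g ^^ Suc (Suc k)) (x \<otimes> g x)" by (simp only: funpow.simps o_apply)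
  finally show ?case .
qed

lemma g_swap: "(g ^^ k) (g s) = (g ^^ Suc k) s"
  by (simp only: funpow_Suc_right o_apply)

lemma range_el: "n \<le> k \<Longrightarrow> (g ^^ k) s \<otimes> (g ^^ Suc k) s = (g ^^ Suc k) s \<otimes> (g ^^ Suc (Suc k)) s"
proof -
  assume "n \<le> k"
  then have "(g ^^ k) (s \<otimes> g s) = (g ^^ Suc k) (s \<otimes> g s)" by (rule range_k)
  then show ?thesis unfolding gk_meet g_swap .
qed

definition E :: "'a set \<Rightarrow> nat \<Rightarrow> 'a set set" where
  "E I k = {J. PI J \<and> (\<forall>s\<in>I. (g ^^ k) s \<in> J)}"

lemma E_PI: "J \<in> E I k \<Longrightarrow> PI J" unfolding E_def by blast

lemma Z1:
  assumes J: "PI J" and K: "K \<in> E I k" and ZK: "Z J \<subseteq> K"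
  shows "J \<in> E I (Suc k)"
  unfolding E_def
proof (intro CollectI conjI ballI J)
  fix s assume s: "s \<in> I"
  define t where "t = (g ^^ k) s"
  have tK: "t \<in> K" using K s unfolding E_def t_def by blast
  have PK: "PI K" using K by (rule E_PI)
  show "(g ^^ Suc k) s \<in> J"
  proof (rule ccontr)
    assume "(g ^^ Suc k) s \<notin> J"
    then have "ps (nn t) \<notin> J" by (simp add: t_def g_def)
    then have "nn (ps (nn t)) \<in> Z J" by (simp add: Z_mem)
    then have "nn (ps (nn t)) \<in> K" using ZK by blast
    then have "t \<oplus> nn (ps (nn t)) \<in> K" using tK PI_j[OF PK] by blast
    then show False using join_plus PI_1[OF PK] by simp
  qed
qed

lemma Z2:
  assumes I: "PI I" and J: "J \<in> E I (Suc k)"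
  shows "\<exists>K\<in>E I k. Z J \<subseteq> K"
proof -
  have PJ: "PI J" using J by (rule E_PI)
  have PZ: "PI (Z J)" using Z_PI[OF PJ] .
  define A where "A = {z. \<exists>s\<in>I. \<exists>j\<in>Z J. z \<preceq> (g ^^ k) s \<oplus> j}"
  have i: "idl A" unfolding idl_def
  proof (intro conjI ballI allI impI)
    show "b0 \<in> A" unfolding A_def using PI_0[OF I] PI_0[OF PZ] le_0 by blast
  next
    fix x y assume "x \<in> A" and yx: "y \<preceq> x"
    then obtain s j where "s \<in> I" "j \<in> Z J" "x \<preceq> (g ^^ k) s \<oplus> j" unfolding A_def by blast
    moreover have "y \<preceq> (g ^^ k) s \<oplus> j" using le_trans[OF yx] calculation(3) .
    ultimately show "y \<in> A" unfolding A_def by blast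
  next
    fix x y assume "x \<in> A" "y \<in> A"
    then obtain s1 j1 s2 j2 where a: "s1 \<in> I" "j1 \<in> Z J" "x \<preceq> (g ^^ k) s1 \<oplus> j1"
      "s2 \<in> I" "j2 \<in> Z J" "y \<preceq> (g ^^ k) s2 \<oplus> j2" unfolding A_def by blast
    have s: "s1 \<oplus> s2 \<in> I" using a PI_j[OF I] by blast
    have j: "j1 \<oplus> j2 \<in> Z J" using a PI_j[OF PZ] by blast
    have "(g ^^ k) s1 \<preceq> (g ^^ k) (s1 \<oplus> s2)" by (rule gk_mono) simp
    moreover have "(g ^^ k) s2 \<preceq> (g ^^ k) (s1 \<oplus> s2)" by (rule gk_mono) simp
    ultimately have "(g ^^ k) s1 \<oplus> j1 \<preceq> (g ^^ k) (s1 \<oplus> s2) \<oplus> (j1 \<oplus> j2)"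
      "(g ^^ k) s2 \<oplus> j2 \<preceq> (g ^^ k) (s1 \<oplus> s2) \<oplus> (j1 \<oplus> j2)"
      by (simp_all add: j_mono)
    then have "x \<oplus> y \<preceq> (g ^^ k) (s1 \<oplus> s2) \<oplus> (j1 \<oplus> j2)"
      using le_jI[OF le_trans[OF a(3)] le_trans[OF a(6)]] by blast
    then show "x \<oplus> y \<in> A" unfolding A_def using s j by blast
  qed
  have f: "fil {b1}" unfolding fil_def by (simp add: le_1_iff)
  have sq: "sat (=) X" for X :: "'a set" unfolding sat_def by simp
  have d: "A \<inter> {b1} = {}"
  proof -
    { assume "b1 \<in> A"
      then obtain s j where sj: "s \<in> I" "j \<in> Z J" "b1 \<preceq> (g ^^ k) s \<oplus> j" unfolding A_def by blast
      define t where "t = (g ^^ k) s"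
      have "t \<oplus> j = b1" using sj(3) le_1_iff t_def by simp
      then have "nn t \<otimes> nn j = b0" using nn_j[of t j] by simp
      then have "nn j \<preceq> g t" using pc_iff by (simp add: g_def)
      moreover have "g t \<in> J" using J sj(1) unfolding E_def t_def by simp
      ultimately have "nn j \<in> J" using PI_down[OF PJ] by blast
      then have False using sj(2) Z_mem by blast }
    then show ?thesis by blast
  qed
  obtain K where K: "PI K" "A \<subseteq> K" using pit[OF lcong_eq i sq f sq d] by blast
  have "K \<in> E I k" unfolding E_def
  proof (intro CollectI conjI ballI K(1))
    fix s assume "s \<in> I"
    moreover have "(g ^^ k) s \<preceq> (g ^^ k) s \<oplus> b0" by simp
    ultimately have "(g ^^ k) s \<in> A" unfolding A_def using PI_0[OF PZ] by blast
    then show "(g ^^ k) s \<in> K" using K(2) by blast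
  qed
  moreover have "Z J \<subseteq> K"
  proof
    fix j assume "j \<in> Z J"
    moreover have "j \<preceq> (g ^^ k) b0 \<oplus> j" by simp
    ultimately have "j \<in> A" unfolding A_def using PI_0[OF I] by blast
    then show "j \<in> K" using K(2) by blast
  qed
  ultimately show ?thesis by blast
qed

lemma R:
  assumes I: "PI I" and nk: "n \<le> k" and J: "J \<in> E I (Suc (Suc k))"
  shows "J \<in> E I k \<or> J \<in> E I (Suc k)"
proof (rule ccontr)
  assume nt: "\<not> (J \<in> E I k \<or> J \<in> E I (Suc k))"
  have PJ: "PI J" using J by (rule E_PI)
  obtain s1 s2 where s: "s1 \<in> I" "(g ^^ k) s1 \<notin> J" "s2 \<in> I" "(g ^^ Suc k) s2 \<notin> J"
    using nt PJ unfolding E_def by blast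
  define s where "s = s1 \<oplus> s2"
  have sI: "s \<in> I" unfolding s_def using s PI_j[OF I] by blast
  have "(g ^^ k) s1 \<preceq> (g ^^ k) s" unfolding s_def by (rule gk_mono) simp
  then have 1: "(g ^^ k) s \<notin> J" using s(2) PI_down[OF PJ] by blast
  have "(g ^^ Suc k) s2 \<preceq> (g ^^ Suc k) s" unfolding s_def by (rule gk_mono) simp
  then have 2: "(g ^^ Suc k) s \<notin> J" using s(4) PI_down[OF PJ] by blast
  have "(g ^^ k) s \<otimes> (g ^^ Suc k) s \<notin> J" using 1 2 PI_m[OF PJ] by blast
  moreover have "(g ^^ Suc (Suc k)) s \<in> J" using J sI unfolding E_def by blast
  then have "(g ^^ Suc k) s \<otimes> (g ^^ Suc (Suc k)) s \<in> J" using PI_m[OF PJ] by blast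
  ultimately show False using range_el[OF nk] by simp
qed

lemma Ext: "J \<in> E I k \<Longrightarrow> Z J \<in> E I (Suc k)"
  using Z1[OF Z_PI[OF E_PI] _ ] by simp

lemma Ext2: "J \<in> E I k \<Longrightarrow> J \<in> E I (Suc (Suc k))"
  using Ext[OF Ext] by simp

lemma Down: "J \<in> E I k \<Longrightarrow> PI K \<Longrightarrow> K \<subseteq> J \<Longrightarrow> K \<in> E I (Suc (Suc k))"
proof -
  assume J: "J \<in> E I k" and K: "PI K" and KJ: "K \<subseteq> J"
  have "Z K \<in> E I (Suc k)" using Z1[OF Z_PI[OF K] J] KJ by simp
  then show ?thesis using Z1[OF K] by blast
qed


definition Y :: "'a set \<Rightarrow> 'a set set" where
  "Y I = E I n \<union> E I (Suc n)"

lemma Y_PI: "J \<in> Y I \<Longrightarrow> PI J" unfolding Y_def using E_PI by blast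

lemma Y2: assumes I: "PI I" shows "E I (Suc (Suc n)) \<subseteq> Y I"
  using R[OF I order_refl] unfolding Y_def by blast

lemma Y3: assumes I: "PI I" shows "E I (Suc (Suc (Suc n))) \<subseteq> Y I"
proof
  fix J assume "J \<in> E I (Suc (Suc (Suc n)))"
  then have "J \<in> E I (Suc n) \<or> J \<in> E I (Suc (Suc n))" using R[OF I, of "Suc n"] by simp
  then show "J \<in> Y I" using Y2[OF I] unfolding Y_def by blast
qed

lemma Y_down: assumes I: "PI I" and J: "J \<in> Y I" and K: "PI K" "K \<subseteq> J" shows "K \<in> Y I"
proof -
  have "J \<in> E I n \<or> J \<in> E I (Suc n)" using J unfolding Y_def by blast
  then show ?thesis
  proof
    assume "J \<in> E I n" then show ?thesis using Down[OF _ K] Y2[OF I] by blast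
  next
    assume "J \<in> E I (Suc n)" then show ?thesis using Down[OF _ K] Y3[OF I] by blast
  qed
qed

lemma Y_Z: assumes I: "PI I" and J: "J \<in> Y I" shows "Z J \<in> Y I"
proof -
  have "J \<in> E I n \<or> J \<in> E I (Suc n)" using J unfolding Y_def by blast
  then show ?thesis
  proof
    assume "J \<in> E I n" then show ?thesis using Ext unfolding Y_def by blast
  next
    assume "J \<in> E I (Suc n)" then show ?thesis using Ext Y2[OF I] by blast
  qed
qed

definition thY :: "'a set \<Rightarrow> 'a \<Rightarrow> 'a \<Rightarrow> bool" where
  "thY I x y \<longleftrightarrow> (\<forall>J\<in>Y I. x \<in> J \<longleftrightarrow> y \<in> J)"

lemma thY_cong: assumes I: "PI I" shows "congruence L (thY I)"
  unfolding congruence_def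
proof (intro conjI allI impI)
  show "equivp (thY I)" by (rule equivpI) (auto simp: reflp_def symp_def transp_def thY_def)
next
  fix x y u v assume a: "thY I x y \<and> thY I u v"
  show "thY I (x \<otimes> u) (y \<otimes> v)" unfolding thY_def
  proof
    fix J assume J: "J \<in> Y I"
    have "x \<in> J \<longleftrightarrow> y \<in> J" "u \<in> J \<longleftrightarrow> v \<in> J" using a J unfolding thY_def by auto
    then show "x \<otimes> u \<in> J \<longleftrightarrow> y \<otimes> v \<in> J" by (simp add: PI_m[OF Y_PI[OF J]])
  qed
next
  fix x y u v assume a: "thY I x y \<and> thY I u v"
  show "thY I (x \<oplus> u) (y \<oplus> v)" unfolding thY_def
  proof
    fix J assume J: "J \<in> Y I"
    have "x \<in> J \<longleftrightarrow> y \<in> J" "u \<in> J \<longleftrightarrow> v \<in> J" using a J unfolding thY_def by auto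
    then show "x \<oplus> u \<in> J \<longleftrightarrow> y \<oplus> v \<in> J" by (simp add: PI_j[OF Y_PI[OF J]])
  qed
next
  fix x y assume xy: "thY I x y"
  have key: "ps y \<in> J" if J: "J \<in> Y I" "ps x \<in> J" and xy: "thY I x y" for J x y
  proof -
    obtain K where K: "PI K" "K \<subseteq> J" "x \<notin> K" using pc_lemma[OF Y_PI[OF J(1)] J(2)] by blast
    have "K \<in> Y I" using Y_down[OF I J(1) K(1,2)] .
    then have "y \<notin> K" using xy K(3) unfolding thY_def by blast
    then have "ps y \<in> K" using PI_pc[OF K(1)] by blast
    then show ?thesis using K(2) by blast
  qed
  have yx: "thY I y x" using xy unfolding thY_def by blast
  show "thY I (ps x) (ps y)" unfolding thY_def
  proof
    fix J assume J: "J \<in> Y I"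
    show "ps x \<in> J \<longleftrightarrow> ps y \<in> J"
    proof
      assume "ps x \<in> J" then show "ps y \<in> J" by (rule key[OF J _ xy])
    next
      assume "ps y \<in> J" then show "ps x \<in> J" by (rule key[OF J _ yx])
    qed
  qed
next
  fix x y assume xy: "thY I x y"
  show "thY I (nn x) (nn y)" unfolding thY_def
  proof
    fix J assume J: "J \<in> Y I"
    have "Z J \<in> Y I" using Y_Z[OF I J] .
    then have "x \<in> Z J \<longleftrightarrow> y \<in> Z J" using xy unfolding thY_def by blast
    then show "nn x \<in> J \<longleftrightarrow> nn y \<in> J" unfolding Z_mem by blast
  qed
qed

lemma I_in_E: "PI I \<Longrightarrow> I \<in> E I (2 * m)"
proof (induct m)
  case 0 then show ?case unfolding E_def by simp
next
  case (Suc m) then show ?case using Ext2[of I I "2 * m"] by simp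
qed

lemma I_in_Y: assumes I: "PI I" shows "I \<in> Y I"
proof (cases "even n")
  case True
  then obtain m where "n = 2 * m" by blast
  then show ?thesis using I_in_E[OF I, of m] unfolding Y_def by simp
next
  case False
  then have "even (Suc n)" by simp
  then obtain m where "Suc n = 2 * m" by (rule evenE)
  then show ?thesis using I_in_E[OF I, of m] unfolding Y_def by simp
qed

lemma Y_all:
  assumes s: "simple_alg L" and I: "PI I" and K: "PI K"
  shows "K \<in> Y I"
proof (rule ccontr)
  assume KY: "K \<notin> Y I"
  have c: "congruence L (thY I)" by (rule thY_cong[OF I])
  have "\<not> thY I b0 b1" unfolding thY_def using I_in_Y[OF I] PI_0[OF I] PI_1[OF I] by blast
  then have "thY I \<noteq> (\<lambda>_ _. True)" by metis
  then have eq: "thY I = (=)" using s c unfolding simple_alg_def by blast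
  have "K \<notin> E I n" "K \<notin> E I (Suc n)" using KY unfolding Y_def by auto
  then obtain s1 s2 where s: "s1 \<in> I" "(g ^^ n) s1 \<notin> K" "s2 \<in> I" "(g ^^ Suc n) s2 \<notin> K"
    using K unfolding E_def by blast
  define s where "s = s1 \<oplus> s2"
  have sI: "s \<in> I" unfolding s_def using s PI_j[OF I] by blast
  have "(g ^^ n) s1 \<preceq> (g ^^ n) s" unfolding s_def by (rule gk_mono) simp
  then have 1: "(g ^^ n) s \<notin> K" using s(2) PI_down[OF K] by blast
  have "(g ^^ Suc n) s2 \<preceq> (g ^^ Suc n) s" unfolding s_def by (rule gk_mono) simp
  then have 2: "(g ^^ Suc n) s \<notin> K" using s(4) PI_down[OF K] by blast
  define a where "a = (g ^^ n) s \<otimes> (g ^^ Suc n) s"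
  have aK: "a \<notin> K" unfolding a_def using 1 2 PI_m[OF K] by blast
  have "thY I a b0" unfolding thY_def
  proof
    fix J assume J: "J \<in> Y I"
    have "a \<in> J"
    proof (cases "J \<in> E I n")
      case True
      then have "(g ^^ n) s \<in> J" using sI unfolding E_def by blast
      then show ?thesis unfolding a_def using PI_m[OF Y_PI[OF J]] by blast
    next
      case False
      then have "J \<in> E I (Suc n)" using J unfolding Y_def by blast
      then have "(g ^^ Suc n) s \<in> J" using sI unfolding E_def by blast
      then show ?thesis unfolding a_def using PI_m[OF Y_PI[OF J]] by blast
    qed
    then show "a \<in> J \<longleftrightarrow> b0 \<in> J" using PI_0[OF Y_PI[OF J]] by blast
  qed
  then have "a = b0" using eq by metis
  then show False using aK PI_0[OF K] by blast
qed

lemma E_comp: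
  assumes I: "PI I"
  shows "J \<in> E I k \<Longrightarrow> (even k \<longrightarrow> (comparable_in (dual_space L))\<^sup>*\<^sup>* I J) \<and>
                          (odd k \<longrightarrow> (comparable_in (dual_space L))\<^sup>*\<^sup>* I (Z J))"
proof (induct k arbitrary: J)
  case 0
  then have "PI J" "I \<subseteq> J" unfolding E_def by auto
  then have "comparable_in (dual_space L) I J" using I unfolding comparable_in_def dual_space_def by blast
  then show ?case by simp
next
  case (Suc k)
  obtain K where K: "K \<in> E I k" "Z J \<subseteq> K" using Z2[OF I Suc(2)] by blast
  have PK: "PI K" using K(1) by (rule E_PI)
  have PJ: "PI J" using Suc(2) by (rule E_PI)
  show ?case
  proof (cases "even k")
    case True
    then have "(comparable_in (dual_space L))\<^sup>*\<^sup>* I K" using Suc(1)[OF K(1)] by blast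
    moreover have "comparable_in (dual_space L) K (Z J)"
      using PK Z_PI[OF PJ] K(2) unfolding comparable_in_def dual_space_def by blast
    ultimately show ?thesis using True by (auto intro: rtranclp.rtrancl_into_rtrancl)
  next
    case False
    then have "(comparable_in (dual_space L))\<^sup>*\<^sup>* I (Z K)" using Suc(1)[OF K(1)] by blast
    moreover have "Z K \<subseteq> J" using Z_anti[OF K(2)] by simp
    then have "comparable_in (dual_space L) (Z K) J"
      using Z_PI[OF PK] PJ unfolding comparable_in_def dual_space_def by blast
    ultimately show ?thesis using False by (auto intro: rtranclp.rtrancl_into_rtrancl)
  qed
qed

theorem simple_only_if:
  assumes s: "simple_alg L"
  shows "\<exists>Q. order_component (dual_space L) Q \<and> dual_space L = Q \<union> Z ` Q"
proof -
  obtain x y :: 'a where "x \<noteq> y" using s unfolding simple_alg_def by blast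
  have "b0 \<noteq> b1"
  proof
    assume e: "b0 = b1"
    have z: "z = b0" for z
    proof -
      have "z = z \<otimes> b1" by simp
      also have "\<dots> = z \<otimes> b0" using e by simp
      finally show "z = b0" by simp
    qed
    have "x = b0" by (rule z)
    moreover have "y = b0" by (rule z)
    ultimately show False using \<open>x \<noteq> y\<close> by simp
  qed
  have i: "idl {b0}" unfolding idl_def by (simp add: le_0_iff)
  have f: "fil {b1}" unfolding fil_def by (simp add: le_1_iff)
  have sq: "sat (=) X" for X :: "'a set" unfolding sat_def by simp
  have d: "{b0} \<inter> {b1} = {}" using \<open>b0 \<noteq> b1\<close> by blast
  obtain I where I: "PI I" using pit[OF lcong_eq i sq f sq d] by blast
  define P where "P = dual_space L"
  define r where "r = comparable_in P"
  define Q where "Q = {K. r\<^sup>*\<^sup>* I K}"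
  have IP: "I \<in> P" using I unfolding P_def dual_space_def by simp
  have rsym: "\<And>a b. r a b \<Longrightarrow> r b a" unfolding r_def comparable_in_def by blast
  have QP: "Q \<subseteq> P"
  proof
    fix K assume "K \<in> Q"
    then have "r\<^sup>*\<^sup>* I K" unfolding Q_def by simp
    then show "K \<in> P"
    proof (induct rule: rtranclp_induct)
      case base then show ?case by (rule IP)
    next
      case (step y z) then show ?case unfolding r_def comparable_in_def by blast
    qed
  qed
  have oc: "order_component P Q" unfolding order_component_def
  proof (intro conjI allI impI)
    show "Q \<noteq> {}" unfolding Q_def by blast
    show "Q \<subseteq> P" by (rule QP)
    show "path_connected_set P Q" unfolding path_connected_set_def
    proof (intro ballI)
      fix J K assume "J \<in> Q" "K \<in> Q"
      then have "r\<^sup>*\<^sup>* J I" "r\<^sup>*\<^sup>* I K" unfolding Q_def using rtranclp_sym_rel[OF rsym] by auto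
      then show "(comparable_in P)\<^sup>*\<^sup>* J K" unfolding r_def by simp
    qed
  next
    fix R assume R: "Q \<subseteq> R \<and> R \<subseteq> P \<and> path_connected_set P R"
    have "R \<subseteq> Q"
    proof
      fix K assume "K \<in> R"
      moreover have "I \<in> R" using R unfolding Q_def by blast
      ultimately have "r\<^sup>*\<^sup>* I K" using R unfolding path_connected_set_def r_def by blast
      then show "K \<in> Q" unfolding Q_def by simp
    qed
    then show "R = Q" using R by blast
  qed
  have ZP: "Z K \<in> P" if "K \<in> P" for K using that Z_PI unfolding P_def dual_space_def by blast
  have "P \<subseteq> Q \<union> Z ` Q"
  proof
    fix K assume "K \<in> P"
    then have PK: "PI K" unfolding P_def dual_space_def by simp
    have "K \<in> Y I" using Y_all[OF s I PK] .
    then obtain k where k: "K \<in> E I k" unfolding Y_def by blast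
    show "K \<in> Q \<union> Z ` Q"
    proof (cases "even k")
      case True then show ?thesis using E_comp[OF I k] unfolding Q_def r_def P_def by blast
    next
      case False
      then have "Z K \<in> Q" using E_comp[OF I k] unfolding Q_def r_def P_def by blast
      moreover have "K = Z (Z K)" by simp
      ultimately show ?thesis by blast
    qed
  qed
  moreover have "Q \<union> Z ` Q \<subseteq> P" using QP ZP by blast
  ultimately show ?thesis using oc unfolding P_def by blast
qed

end

theorem theorem4p2:
  fixes n :: nat and L :: "'a pmalg"
  assumes "in_M n L"
  shows "simple_alg L \<longleftrightarrow>
    (\<exists>Q. order_component (dual_space L) Q \<and>
         dual_space L = Q \<union> zeta L ` Q)"
proof -
  have h: "bdl L" "is_pseudocomplemented L" "is_de_morgan L"
    "\<forall>x y. leq L (meet L x (neg L (pc L (neg L x)))) (join L y (pc L y))"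
    "\<forall>x. iter_np L n (meet L x (pc L (neg L x))) = iter_np L (Suc n) (meet L x (pc L (neg L x)))"
    using assms unfolding in_M_def by blast+
  interpret pmR L using h(1-4) by unfold_locales
  have gg: "pmL.g L = (\<lambda>z. pc L (neg L z))" by (rule ext) (simp add: g_def)
  interpret pmN L n
  proof unfold_locales
    show "\<forall>x. (pmL.g L ^^ n) (meet L x (pmL.g L x)) = (pmL.g L ^^ Suc n) (meet L x (pmL.g L x))"
      using h(5) unfolding gg iter_np_def by simp
  qed
  show ?thesis
  proof
    assume "simple_alg L" then show "\<exists>Q. order_component (dual_space L) Q \<and> dual_space L = Q \<union> zeta L ` Q"
      by (rule simple_only_if)
  next
    assume "\<exists>Q. order_component (dual_space L) Q \<and> dual_space L = Q \<union> zeta L ` Q"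
    then show "simple_alg L" using simple_if by blast
  qed
qed

end
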